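(* For the qudit unitaries $I=\sum_{i=0}^{d-1}|i\rangle\langle i|$ and $V=|0\rangle\langle 0|-\sum_{i=1}^{d-1}|i\rangle\langle i|$, the corresponding unitary channels are perfectly distinguishable with an unentangled input state (e.g. $|+\rangle=(|0\rangle+|1\rangle)/\sqrt2$) for every $d$, whereas with a maximally entangled input state the optimal success probability $\tfrac12\big[1+\sqrt{1-(1-2/d)^2}\big]$ tends to $\tfrac12$ (random guessing) as $d\to\infty$.
   Context: Single-shot discrimination of two unitary channels $\rho\mapsto U\rho U^\dagger$ with uniform priors; an input state (possibly entangled with an ancilla) is prepared, one use of the unknown channel is applied, and an optimal measurement is performed. *)

theory Defs
  imports Complex_Main
begin

text \<open>The system is a qudit with basis
indices 0..<d; an ancilla with basis index set A is attached, so joint states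
are functions on {0..<d} \<times> A (vectors in C^d \<otimes> C^|A|).  Operators on a finite
index set S are kernels S \<Rightarrow> S \<Rightarrow> complex.\<close>

definition inner_on :: "'a set \<Rightarrow> ('a \<Rightarrow> complex) \<Rightarrow> ('a \<Rightarrow> complex) \<Rightarrow> complex" where
  "inner_on S u v = (\<Sum>x\<in>S. cnj (u x) * v x)"

definition op_apply :: "'a set \<Rightarrow> ('a \<Rightarrow> 'a \<Rightarrow> complex) \<Rightarrow> ('a \<Rightarrow> complex) \<Rightarrow> ('a \<Rightarrow> complex)" where
  "op_apply S E v = (\<lambda>x. \<Sum>y\<in>S. E x y * v y)"

definition is_state :: "'a set \<Rightarrow> ('a \<Rightarrow> complex) \<Rightarrow> bool" where
  "is_state S v \<longleftrightarrow> inner_on S v v = 1"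

text \<open>Effect operator: 0 \<le> E \<le> I (as quadratic forms on C^S, which over the
complex numbers includes Hermiticity).  A two-outcome POVM is {E, I - E}.\<close>
definition is_effect :: "'a set \<Rightarrow> ('a \<Rightarrow> 'a \<Rightarrow> complex) \<Rightarrow> bool" where
  "is_effect S E \<longleftrightarrow> (\<forall>v. inner_on S v (op_apply S E v) \<in> \<real>
      \<and> 0 \<le> Re (inner_on S v (op_apply S E v))
      \<and> Re (inner_on S v (op_apply S E v)) \<le> Re (inner_on S v v))"

definition id_op :: "'a \<Rightarrow> 'a \<Rightarrow> complex" where
  "id_op x y = (if x = y then 1 else 0)"

text \<open>Success probability (uniform priors) of guessing 0 on outcome E and 1 on
outcome I - E, when the two possible output states are psi0, psi1.\<close>
definition success_prob :: "'a set \<Rightarrow> ('a \<Rightarrow> complex) \<Rightarrow> ('a \<Rightarrow> complex)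
    \<Rightarrow> ('a \<Rightarrow> 'a \<Rightarrow> complex) \<Rightarrow> real" where
  "success_prob S psi0 psi1 E =
     1/2 * Re (inner_on S psi0 (op_apply S E psi0))
   + 1/2 * Re (inner_on S psi1 (op_apply S (\<lambda>x y. id_op x y - E x y) psi1))"

definition opt_success :: "'a set \<Rightarrow> ('a \<Rightarrow> complex) \<Rightarrow> ('a \<Rightarrow> complex) \<Rightarrow> real" where
  "opt_success S psi0 psi1 = (SUP E\<in>{E. is_effect S E}. success_prob S psi0 psi1 E)"

text \<open>(U \<otimes> I_anc) applied to a joint state on {0..<d} \<times> A.\<close>
definition apply_local :: "nat \<Rightarrow> (nat \<Rightarrow> nat \<Rightarrow> complex) \<Rightarrow> (nat \<times> 'b \<Rightarrow> complex)
    \<Rightarrow> (nat \<times> 'b \<Rightarrow> complex)" where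
  "apply_local d U psi = (\<lambda>(i, a). \<Sum>j\<in>{0..<d}. U i j * psi (j, a))"

definition channel_opt_success :: "nat \<Rightarrow> 'b set \<Rightarrow> (nat \<Rightarrow> nat \<Rightarrow> complex)
    \<Rightarrow> (nat \<Rightarrow> nat \<Rightarrow> complex) \<Rightarrow> (nat \<times> 'b \<Rightarrow> complex) \<Rightarrow> real" where
  "channel_opt_success d A U V psi =
     opt_success ({0..<d} \<times> A) (apply_local d U psi) (apply_local d V psi)"

definition qI :: "nat \<Rightarrow> nat \<Rightarrow> complex" where
  "qI i j = (if i = j then 1 else 0)"

definition qV :: "nat \<Rightarrow> nat \<Rightarrow> complex" where
  "qV i j = (if i = j then (if i = 0 then 1 else -1) else 0)"

text \<open>Unentangled input |+> \<otimes> |0>_anc (trivial one-dimensional ancilla).\<close>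
definition plus_state :: "nat \<times> nat \<Rightarrow> complex" where
  "plus_state = (\<lambda>(i, a). if a = 0 \<and> (i = 0 \<or> i = 1) then complex_of_real (1 / sqrt 2) else 0)"

definition max_ent :: "nat \<Rightarrow> nat \<times> nat \<Rightarrow> complex" where
  "max_ent d = (\<lambda>(i, a). if i = a \<and> i < d then complex_of_real (1 / sqrt (real d)) else 0)"

end

theory Submission
  imports Defs
begin

definition Qf :: "'a set \<Rightarrow> ('a\<Rightarrow>'a\<Rightarrow>complex) \<Rightarrow> ('a\<Rightarrow>complex) \<Rightarrow> real" where
 "Qf S K w = Re (inner_on S w (op_apply S K w))"
definition Bf :: "'a set \<Rightarrow> ('a\<Rightarrow>'a\<Rightarrow>complex) \<Rightarrow> ('a\<Rightarrow>complex) \<Rightarrow> ('a\<Rightarrow>complex) \<Rightarrow> real" where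
 "Bf S K x y = Re (inner_on S x (op_apply S K y) + inner_on S y (op_apply S K x))"

lemma op_apply_lin: "op_apply S K (\<lambda>z. a * x z + b * y z) = (\<lambda>z. a * op_apply S K x z + b * op_apply S K y z)"
  unfolding op_apply_def by (auto simp: sum.distrib sum_distrib_left algebra_simps intro!: ext sum.cong)

lemma inner_lin_r: "inner_on S w (\<lambda>z. a * x z + b * y z) = a * inner_on S w x + b * inner_on S w y"
  unfolding inner_on_def by (auto simp: sum.distrib sum_distrib_left algebra_simps intro!: sum.cong)

lemma inner_lin_l: "inner_on S (\<lambda>z. a * x z + b * y z) w = cnj a * inner_on S x w + cnj b * inner_on S y w"
  unfolding inner_on_def by (auto simp: sum.distrib sum_distrib_left algebra_simps intro!: sum.cong)

lemma inner_cnj: "cnj (inner_on S u v) = inner_on S v u"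
  unfolding inner_on_def by (simp add: mult.commute)

lemma inner_self_Re: "0 \<le> Re (inner_on S w w)"
  unfolding inner_on_def by (simp add: sum_nonneg)

lemma aux_re: fixes P Q R T :: complex and a b :: real
  shows "Re (complex_of_real a * (cnj (complex_of_real a) * P + cnj (complex_of_real b) * R) + complex_of_real b * (cnj (complex_of_real a) * Q + cnj (complex_of_real b) * T))
   = a^2 * Re P + a*b * Re (Q + R) + b^2 * Re T"
  by (simp add: power2_eq_square distrib_left)

lemma Qf_lin: "Qf S K (\<lambda>z. complex_of_real a * x z + complex_of_real b * y z)
   = a^2 * Qf S K x + a*b * Bf S K x y + b^2 * Qf S K y"
  unfolding Qf_def Bf_def op_apply_lin inner_lin_r inner_lin_l
  by (rule aux_re)

lemma op_apply_id: assumes "finite S" shows "op_apply S id_op w = (\<lambda>p. if p \<in> S then w p else 0)"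
proof (rule ext)
  fix p
  have "op_apply S id_op w p = (\<Sum>y\<in>S. if p = y then w y else 0)"
    unfolding op_apply_def id_op_def by (rule sum.cong) auto
  thus "op_apply S id_op w p = (if p \<in> S then w p else 0)" using assms by (simp add: sum.delta')
qed

lemma inner_cong_r: "(\<And>p. p \<in> S \<Longrightarrow> f p = g p) \<Longrightarrow> inner_on S w f = inner_on S w g"
  unfolding inner_on_def by simp

lemma inner_restr: "inner_on S w (\<lambda>p. if p \<in> S then f p else 0) = inner_on S w f"
  by (rule inner_cong_r) simp

lemma Qf_id: assumes "finite S" shows "Qf S id_op w = Re (inner_on S w w)"
  unfolding Qf_def op_apply_id[OF assms] inner_restr ..

lemma Bf_id: assumes "finite S" shows "Bf S id_op x y = Re (inner_on S x y + inner_on S y x)"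
  unfolding Bf_def op_apply_id[OF assms] inner_restr ..

lemma op_apply_diff: "op_apply S (\<lambda>p q. K p q - E p q) w = (\<lambda>p. op_apply S K w p - op_apply S E w p)"
  unfolding op_apply_def by (auto intro!: ext simp: algebra_simps sum_subtractf)

lemma inner_diff_r: "inner_on S w (\<lambda>p. f p - g p) = inner_on S w f - inner_on S w g"
  unfolding inner_on_def by (simp add: algebra_simps sum_subtractf)

lemma Qf_diff: "Qf S (\<lambda>p q. K p q - E p q) w = Qf S K w - Qf S E w"
  unfolding Qf_def op_apply_diff inner_diff_r by simp

lemma Bf_diff: "Bf S (\<lambda>p q. K p q - E p q) x y = Bf S K x y - Bf S E x y"
  unfolding Bf_def op_apply_diff inner_diff_r by simp

lemma effect_Qf: assumes "is_effect S E" "finite S" shows "0 \<le> Qf S E w" "0 \<le> Qf S (\<lambda>p q. id_op p q - E p q) w"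
  using assms unfolding is_effect_def Qf_diff Qf_id[OF assms(2)] by (auto simp: Qf_def)

lemma succ_eq: "success_prob S u v E = 1/2 * Qf S E u + 1/2 * Qf S (\<lambda>p q. id_op p q - E p q) v"
  unfolding success_prob_def Qf_def by simp

lemma disc: fixes A B D :: real
  assumes h: "\<forall>t. 0 \<le> A + 2*t*D + t^2*B" and B: "B \<ge> 0"
  shows "D^2 \<le> A*B"
proof (cases "B = 0")
  case True
  show ?thesis
  proof (cases "D = 0")
    case False
    have e0: "2*(-(A+1)/(2*D))*D = -(A+1)" using False by simp
    have e: "A + 2*(-(A+1)/(2*D))*D + (-(A+1)/(2*D))^2*B = -1" using e0 True by simp
    have "0 \<le> A + 2*(-(A+1)/(2*D))*D + (-(A+1)/(2*D))^2*B" using h by blast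
    with e show ?thesis by linarith
  qed (use True in simp)
next
  case False
  hence Bp: "B > 0" using B by simp
  have e: "A + 2*(-D/B)*D + (-D/B)^2*B = A - D^2/B" using Bp by (simp add: power2_eq_square)
  have "0 \<le> A + 2*(-D/B)*D + (-D/B)^2*B" using h by blast
  hence "D^2/B \<le> A" using e by linarith
  thus ?thesis using Bp by (simp add: pos_divide_le_eq)
qed

lemma helstrom_real: fixes qu qv be c :: real
  assumes h1: "\<forall>a b. 0 \<le> a^2*qu + a*b*be + b^2*qv"
      and h2: "\<forall>a b. a^2*qu + a*b*be + b^2*qv \<le> a^2 + 2*a*b*c + b^2"
  shows "qu - qv \<le> sqrt (1 - c^2)"
proof -
  define A where "A = qu+qv+be"
  define B where "B = qu+qv-be"
  define D where "D = qu-qv"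
  define A' where "A' = 2+2*c - A"
  define B' where "B' = 2-2*c - B"
  have A0: "A \<ge> 0" using h1[rule_format, of 1 1] by (simp add: A_def)
  have B0: "B \<ge> 0" using h1[rule_format, of 1 "-1"] by (simp add: B_def)
  have A'0: "A' \<ge> 0" using h2[rule_format, of 1 1] by (simp add: A_def A'_def)
  have B'0: "B' \<ge> 0" using h2[rule_format, of 1 "-1"] by (simp add: B_def B'_def)
  have d1: "D^2 \<le> A*B"
  proof (rule disc[OF _ B0], rule allI)
    fix t
    have "0 \<le> (1+t)^2*qu + (1+t)*(1-t)*be + (1-t)^2*qv" using h1 by blast
    moreover have "(1+t)^2*qu + (1+t)*(1-t)*be + (1-t)^2*qv = A + 2*t*D + t^2*B"
      unfolding A_def B_def D_def by (simp add: algebra_simps power2_eq_square)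
    ultimately show "0 \<le> A + 2*t*D + t^2*B" by linarith
  qed
  have d2: "(-D)^2 \<le> A'*B'"
  proof (rule disc[OF _ B'0], rule allI)
    fix t
    have "(1+t)^2*qu + (1+t)*(1-t)*be + (1-t)^2*qv \<le> (1+t)^2 + 2*(1+t)*(1-t)*c + (1-t)^2" using h2 by blast
    moreover have "(1+t)^2*qu + (1+t)*(1-t)*be + (1-t)^2*qv = A + 2*t*D + t^2*B"
      unfolding A_def B_def D_def by (simp add: algebra_simps power2_eq_square)
    moreover have "(1+t)^2 + 2*(1+t)*(1-t)*c + (1-t)^2 = (2+2*c) + t^2*(2-2*c)"
      by (simp add: algebra_simps power2_eq_square)
    moreover have "A' + 2*t*(-D) + t^2*B' = (2+2*c) + t^2*(2-2*c) - (A + 2*t*D + t^2*B)"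
      unfolding A'_def B'_def by (simp add: algebra_simps)
    ultimately show "0 \<le> A' + 2*t*(-D) + t^2*B'" by linarith
  qed
  have m0: "0 \<le> A*B' + A'*B" using A0 B0 A'0 B'0 by simp
  have d2': "D^2 \<le> A'*B'" using d2 by simp
  have "(D^2)*(D^2) \<le> (A*B)*(A'*B')"
    by (rule mult_mono[OF d1 d2']) (use A0 B0 in auto)
  hence "4*(D^2)*(D^2) \<le> 4*(A*B)*(A'*B')" by simp
  also have "4*(A*B)*(A'*B') \<le> (A*B' + A'*B)^2"
  proof -
    have "(A*B' + A'*B)^2 = 4*(A*B)*(A'*B') + (A'*B - A*B')^2" by algebra
    moreover have "0 \<le> (A'*B - A*B')^2" by simp
    ultimately show ?thesis by linarith
  qed
  finally have "(2*D^2)^2 \<le> (A*B' + A'*B)^2" by (simp add: power2_eq_square)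
  hence "A*B' + A'*B \<ge> 2*D^2" by (rule power2_le_imp_le[OF _ m0])
  moreover have "(A+A')*(B+B') = A*B + A'*B' + (A*B' + A'*B)" by (simp add: algebra_simps)
  ultimately have "4*D^2 \<le> (A+A')*(B+B')" using d1 d2' by linarith
  moreover have "A+A' = 2+2*c" unfolding A'_def by simp
  moreover have "B+B' = 2-2*c" unfolding B'_def by simp
  moreover have "(2+2*c)*(2-2*c) = 4*(1-c^2)" by (simp add: algebra_simps power2_eq_square)
  ultimately have "D^2 \<le> 1 - c^2" by simp
  thus ?thesis unfolding D_def by (rule real_le_rsqrt)
qed

lemma real_alg: fixes c :: real assumes c: "-1 < c" "c < 1"
  defines "s \<equiv> sqrt (1+c)" and "t \<equiv> sqrt (1-c)"
  defines "p \<equiv> 1/(2*s) + 1/(2*t)" and "m \<equiv> 1/(2*s) - 1/(2*t)"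
  shows "p^2 + m^2 + 2*p*m*c = 1"
    and "1/2 * (p + m*c)^2 + 1/2 * (1 - (p*c + m)^2) = 1/2 * (1 + sqrt (1 - c^2))"
proof -
  have s0: "s > 0" and t0: "t > 0" using c by (auto simp: s_def t_def)
  have s2: "s^2 = 1+c" and t2: "t^2 = 1-c" using c by (auto simp: s_def t_def)
  have st: "sqrt (1 - c^2) = s*t" unfolding s_def t_def
    by (subst real_sqrt_mult[symmetric]) (simp add: algebra_simps power2_eq_square)
  define a where "a = 1/(2*s)"
  define b where "b = 1/(2*t)"
  have a2: "a^2 = 1/(4*(1+c))" unfolding a_def using s2 by (simp add: power2_eq_square[symmetric] power_divide)
  have b2: "b^2 = 1/(4*(1-c))" unfolding b_def using t2 by (simp add: power_divide)
  have pm: "p = a + b" "m = a - b" unfolding p_def m_def a_def b_def by simp_all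
  have "p^2 + m^2 + 2*p*m*c = 2*a^2 + 2*b^2 + 2*(a^2 - b^2)*c" unfolding pm by (simp add: power2_eq_square algebra_simps)
  also have "\<dots> = 1"
  proof -
    have nz: "1+c \<noteq> 0" "1-c \<noteq> 0" using c by auto
    have x1: "a^2*(1+c) = 1/4" unfolding a2 using nz by simp
    have x2: "b^2*(1-c) = 1/4" unfolding b2 using nz by simp
    have "2*a^2 + 2*b^2 + 2*(a^2 - b^2)*c = 2*(a^2*(1+c)) + 2*(b^2*(1-c))" by (simp add: algebra_simps)
    thus ?thesis unfolding x1 x2 by simp
  qed
  finally show "p^2 + m^2 + 2*p*m*c = 1" .
  have "1/2 * (p + m*c)^2 + 1/2 * (1 - (p*c + m)^2) = 1/2 + 2*(a*b)*(1 - c^2)" unfolding pm by (simp add: power2_eq_square algebra_simps)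
  also have "a*b = 1/(4*(s*t))" unfolding a_def b_def by simp
  also have "1/2 + 2*(1/(4*(s*t)))*(1 - c^2) = 1/2 + (s*t)/2"
  proof -
    have "(s*t)^2 = (1+c)*(1-c)" by (simp add: power_mult_distrib s2 t2)
    hence "1 - c^2 = (s*t)^2" by (simp add: algebra_simps power2_eq_square)
    thus ?thesis using s0 t0 by (simp add: power2_eq_square)
  qed
  finally show "1/2 * (p + m*c)^2 + 1/2 * (1 - (p*c + m)^2) = 1/2 * (1 + sqrt (1 - c^2))" unfolding st by simp
qed

lemma upper:
  assumes fin: "finite S" and eff: "is_effect S E"
    and uu: "inner_on S u u = 1" and vv: "inner_on S v v = 1" and uv: "Re (inner_on S u v) = c"
  shows "success_prob S u v E \<le> 1/2 * (1 + sqrt (1 - c^2))"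
proof -
  define qu where "qu = Qf S E u"
  define qv where "qv = Qf S E v"
  define be where "be = Bf S E u v"
  have bid: "Bf S id_op u v = 2*c"
  proof -
    have "inner_on S v u = cnj (inner_on S u v)" by (simp add: inner_cnj)
    thus ?thesis unfolding Bf_id[OF fin] using uv by simp
  qed
  have qiu: "Qf S id_op u = 1" unfolding Qf_id[OF fin] uu by simp
  have qiv: "Qf S id_op v = 1" unfolding Qf_id[OF fin] vv by simp
  have h1: "\<forall>a b. 0 \<le> a^2*qu + a*b*be + b^2*qv"
  proof (intro allI)
    fix a b
    have "0 \<le> Qf S E (\<lambda>z. complex_of_real a * u z + complex_of_real b * v z)" by (rule effect_Qf(1)[OF eff fin])
    thus "0 \<le> a^2*qu + a*b*be + b^2*qv" unfolding Qf_lin qu_def qv_def be_def .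
  qed
  have h2: "\<forall>a b. a^2*qu + a*b*be + b^2*qv \<le> a^2 + 2*a*b*c + b^2"
  proof (intro allI)
    fix a b
    have "0 \<le> Qf S (\<lambda>p q. id_op p q - E p q) (\<lambda>z. complex_of_real a * u z + complex_of_real b * v z)"
      by (rule effect_Qf(2)[OF eff fin])
    hence "0 \<le> a^2 * (1 - qu) + a*b*(2*c - be) + b^2*(1 - qv)"
      unfolding Qf_lin Qf_diff Bf_diff qiu qiv bid qu_def qv_def be_def .
    thus "a^2*qu + a*b*be + b^2*qv \<le> a^2 + 2*a*b*c + b^2" by (simp add: algebra_simps)
  qed
  have hr: "qu - qv \<le> sqrt (1 - c^2)" by (rule helstrom_real[OF h1 h2])
  have "success_prob S u v E = 1/2 * qu + 1/2 * (1 - qv)"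
    unfolding succ_eq Qf_diff qiv qu_def qv_def ..
  thus ?thesis using hr unfolding ring_distribs by linarith
qed

lemma proj_apply: "op_apply S (\<lambda>x y. e x * cnj (e y)) w = (\<lambda>x. e x * inner_on S e w)"
  unfolding op_apply_def inner_on_def by (auto simp: sum_distrib_left algebra_simps intro!: ext sum.cong)

lemma inner_scal_r: "inner_on S w (\<lambda>x. e x * z) = inner_on S w e * z"
  unfolding inner_on_def by (simp add: sum_distrib_right mult.assoc)

lemma cs: assumes ee: "inner_on S e e = 1" shows "(cmod (inner_on S e w))^2 \<le> Re (inner_on S w w)"
proof -
  define z where "z = inner_on S e w"
  have we: "inner_on S w e = cnj z" unfolding z_def by (simp add: inner_cnj)
  have "0 \<le> Re (inner_on S (\<lambda>x. 1 * w x + (-z) * e x) (\<lambda>x. 1 * w x + (-z) * e x))" by (rule inner_self_Re)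
  also have "inner_on S (\<lambda>x. 1 * w x + (-z) * e x) (\<lambda>x. 1 * w x + (-z) * e x) = inner_on S w w - z * cnj z"
    unfolding inner_lin_l inner_lin_r we ee z_def[symmetric] by (simp add: algebra_simps)
  finally have "Re (z * cnj z) \<le> Re (inner_on S w w)" by simp
  moreover have "Re (z * cnj z) = (cmod z)^2" by (simp add: complex_norm_square[symmetric] del: complex_mult_cnj)
  ultimately show ?thesis unfolding z_def by simp
qed

lemma proj_Q: "inner_on S w (op_apply S (\<lambda>x y. e x * cnj (e y)) w) = complex_of_real ((cmod (inner_on S e w))^2)"
proof -
  have "inner_on S w (op_apply S (\<lambda>x y. e x * cnj (e y)) w) = inner_on S w e * inner_on S e w"
    unfolding proj_apply inner_scal_r ..
  also have "\<dots> = cnj (inner_on S e w) * inner_on S e w" by (simp add: inner_cnj)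
  also have "\<dots> = complex_of_real ((cmod (inner_on S e w))^2)" by (simp add: mult.commute complex_mult_cnj cmod_power2)
  finally show ?thesis .
qed

lemma proj_effect: assumes "inner_on S e e = 1" shows "is_effect S (\<lambda>x y. e x * cnj (e y))"
  unfolding is_effect_def proj_Q using cs[OF assms] by simp

lemma achieve:
  assumes fin: "finite S" and uu: "inner_on S u u = 1" and vv: "inner_on S v v = 1"
    and uv: "inner_on S u v = complex_of_real c" and c: "-1 < c" "c < 1"
  shows "\<exists>E. is_effect S E \<and> success_prob S u v E = 1/2 * (1 + sqrt (1 - c^2))"
proof -
  define p where "p = 1/(2*sqrt (1+c)) + 1/(2*sqrt (1-c))"
  define m where "m = 1/(2*sqrt (1+c)) - 1/(2*sqrt (1-c))"
  note ra = real_alg[OF c, folded p_def m_def]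
  define e where "e = (\<lambda>z. complex_of_real p * u z + complex_of_real m * v z)"
  have vu: "inner_on S v u = complex_of_real c" using inner_cnj[of S u v] uv by simp
  have ee: "inner_on S e e = complex_of_real (p^2 + m^2 + 2*p*m*c)"
    unfolding e_def inner_lin_l inner_lin_r uu vv uv vu by (simp add: algebra_simps power2_eq_square)
  hence ee1: "inner_on S e e = 1" using ra(1) by simp
  have eu: "inner_on S e u = complex_of_real (p + m*c)"
    unfolding e_def inner_lin_l uu vu by simp
  have ev: "inner_on S e v = complex_of_real (p*c + m)"
    unfolding e_def inner_lin_l uv vv by simp
  define E where "E = (\<lambda>x y. e x * cnj (e y))"
  have "success_prob S u v E = 1/2 * (p + m*c)^2 + 1/2 * (1 - (p*c + m)^2)"
    unfolding succ_eq Qf_diff Qf_id[OF fin] vv unfolding Qf_def E_def proj_Q eu ev norm_of_real power2_abs by simp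
  also have "\<dots> = 1/2 * (1 + sqrt (1 - c^2))" by (rule ra(2))
  finally show ?thesis using proj_effect[OF ee1] unfolding E_def by blast
qed


lemma opt_eq:
  assumes fin: "finite S" and uu: "inner_on S u u = 1" and vv: "inner_on S v v = 1"
    and uv: "inner_on S u v = complex_of_real c" and c: "-1 < c" "c < 1"
  shows "opt_success S u v = 1/2 * (1 + sqrt (1 - c^2))"
proof -
  obtain E where E: "is_effect S E" "success_prob S u v E = 1/2 * (1 + sqrt (1 - c^2))"
    using achieve[OF fin uu vv uv c] by blast
  have ub: "\<And>E'. is_effect S E' \<Longrightarrow> success_prob S u v E' \<le> 1/2 * (1 + sqrt (1 - c^2))"
    by (rule upper[OF fin _ uu vv]) (simp_all add: uv)
  show ?thesis unfolding opt_success_def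
  proof (rule cSup_eq_maximum)
    show "1/2 * (1 + sqrt (1 - c^2)) \<in> (\<lambda>E. success_prob S u v E) ` {E. is_effect S E}"
      using E by (metis (mono_tags, lifting) image_eqI mem_Collect_eq)
  next
    fix x assume "x \<in> (\<lambda>E. success_prob S u v E) ` {E. is_effect S E}"
    thus "x \<le> 1/2 * (1 + sqrt (1 - c^2))" using ub by auto
  qed
qed

definition sg :: "nat \<Rightarrow> complex" where "sg i = (if i = 0 then 1 else -1)"

lemma sg_sq: "cnj (sg i) * sg i = 1" by (simp add: sg_def)

lemma apply_I: "i < d \<Longrightarrow> apply_local d qI psi (i,a) = psi (i,a)"
proof -
  assume i: "i < d"
  have "apply_local d qI psi (i,a) = (\<Sum>j\<in>{0..<d}. qI i j * psi (j,a))" by (simp add: apply_local_def)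
  also have "\<dots> = (\<Sum>j\<in>{0..<d}. if i = j then psi (j,a) else 0)"
    by (rule sum.cong) (simp_all add: qI_def)
  also have "\<dots> = psi (i,a)" using i by (simp only: sum.delta' finite_atLeastLessThan atLeastLessThan_iff) simp
  finally show ?thesis .
qed

lemma apply_V: "i < d \<Longrightarrow> apply_local d qV psi (i,a) = sg i * psi (i,a)"
proof -
  assume i: "i < d"
  have "apply_local d qV psi (i,a) = (\<Sum>j\<in>{0..<d}. qV i j * psi (j,a))" by (simp add: apply_local_def)
  also have "\<dots> = (\<Sum>j\<in>{0..<d}. if i = j then sg j * psi (j,a) else 0)"
    by (rule sum.cong) (simp_all add: qV_def sg_def)
  also have "\<dots> = sg i * psi (i,a)" using i by (simp only: sum.delta' finite_atLeastLessThan atLeastLessThan_iff) simp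
  finally show ?thesis .
qed

lemma inner_cong2: "(\<And>p. p \<in> S \<Longrightarrow> f p = f' p) \<Longrightarrow> (\<And>p. p \<in> S \<Longrightarrow> g p = g' p) \<Longrightarrow> inner_on S f g = inner_on S f' g'"
  unfolding inner_on_def by (rule sum.cong) auto

lemma chan_inner:
  fixes psi :: "nat \<times> 'b \<Rightarrow> complex" and d :: nat and A :: "'b set"
  defines "S \<equiv> {0..<d} \<times> A"
  shows "inner_on S (apply_local d qI psi) (apply_local d qI psi) = inner_on S psi psi"
    and "inner_on S (apply_local d qV psi) (apply_local d qV psi) = inner_on S psi psi"
    and "inner_on S (apply_local d qI psi) (apply_local d qV psi) = inner_on S psi (\<lambda>(i,a). sg i * psi (i,a))"
proof -
  show "inner_on S (apply_local d qI psi) (apply_local d qI psi) = inner_on S psi psi"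
    by (rule inner_cong2) (auto simp: S_def apply_I)
  have "inner_on S (apply_local d qV psi) (apply_local d qV psi)
      = inner_on S (\<lambda>(i,a). sg i * psi (i,a)) (\<lambda>(i,a). sg i * psi (i,a))"
    by (rule inner_cong2) (auto simp: S_def apply_V)
  also have "\<dots> = inner_on S psi psi"
    unfolding inner_on_def
  proof (rule sum.cong)
    fix p assume "p \<in> S"
    obtain i a where p: "p = (i,a)" by fastforce
    have "cnj (sg i * psi (i,a)) * (sg i * psi (i,a)) = (cnj (sg i) * sg i) * (cnj (psi (i,a)) * psi (i,a))"
      by (simp add: algebra_simps)
    thus "cnj ((\<lambda>(i,a). sg i * psi (i,a)) p) * (\<lambda>(i,a). sg i * psi (i,a)) p = cnj (psi p) * psi p"
      unfolding p sg_sq by simp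
  qed simp
  finally show "inner_on S (apply_local d qV psi) (apply_local d qV psi) = inner_on S psi psi" .
  show "inner_on S (apply_local d qI psi) (apply_local d qV psi) = inner_on S psi (\<lambda>(i,a). sg i * psi (i,a))"
    by (rule inner_cong2) (auto simp: S_def apply_I apply_V)
qed

lemma sum01: fixes f :: "nat \<Rightarrow> complex" assumes "d \<ge> 2" "\<And>i. 2 \<le> i \<Longrightarrow> f i = 0"
  shows "(\<Sum>i\<in>{0..<d}. f i) = f 0 + (f 1 :: complex)"
proof -
  have "(\<Sum>i\<in>{0..<d}. f i) = f 0 + (\<Sum>i\<in>{Suc 0..<d}. f i)" using assms(1) by (subst sum.atLeast_Suc_lessThan) auto
  also have "(\<Sum>i\<in>{Suc 0..<d}. f i) = f 1 + (\<Sum>i\<in>{Suc (Suc 0)..<d}. f i)" using assms(1) by (subst sum.atLeast_Suc_lessThan) auto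
  also have "(\<Sum>i\<in>{Suc (Suc 0)..<d}. f i) = 0" using assms(2) by (intro sum.neutral) auto
  finally show ?thesis by simp
qed

lemma sum_single: "(\<Sum>p\<in>A \<times> {0::nat}. g p) = (\<Sum>i\<in>A. g (i, 0))"
  using sum.cartesian_product[of "\<lambda>i a. g (i,a)" "{0::nat}" A] by simp

lemma diag_sum: fixes i d :: nat assumes "i < d" "\<And>a. a \<noteq> i \<Longrightarrow> g a = 0"
  shows "(\<Sum>a\<in>{0..<d}. g a) = (g i :: complex)"
proof -
  have "(\<Sum>a\<in>{0..<d}. g a) = g i + (\<Sum>a\<in>{0..<d} - {i}. g a)" by (subst sum.remove[of "{0..<d}" i]) (simp_all add: assms(1))
  also have "(\<Sum>a\<in>{0..<d} - {i}. g a) = 0" using assms(2) by (intro sum.neutral) auto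
  finally show ?thesis by simp
qed

lemma sum_sq: "(\<Sum>p\<in>A \<times> B. g p) = (\<Sum>i\<in>A. \<Sum>a\<in>B. g (i, a))"
  using sum.cartesian_product[of "\<lambda>i a. g (i,a)" B A] by simp

lemma ofr_sq: "cnj (complex_of_real r) * complex_of_real r = complex_of_real (r * r)"
  by (simp only: complex_cnj_complex_of_real of_real_mult)

lemma half: "cnj (complex_of_real (1 / sqrt 2)) * complex_of_real (1 / sqrt 2) = 1/2"
proof -
  have r: "(1 / sqrt 2) * (1 / sqrt 2) = (1/2 :: real)" by (simp add: real_divide_square_eq)
  have "cnj (complex_of_real (1 / sqrt 2)) * complex_of_real (1 / sqrt 2) = complex_of_real (1/2)"
    by (simp only: ofr_sq r)
  also have "complex_of_real (1/2) = 1/2" by simp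
  finally show ?thesis .
qed

lemma invd: "d > 0 \<Longrightarrow> cnj (complex_of_real (1 / sqrt (real d))) * complex_of_real (1 / sqrt (real d)) = 1 / of_nat d"
proof -
  assume d: "d > 0"
  have r: "(1 / sqrt (real d)) * (1 / sqrt (real d)) = 1 / real d" using d by (simp add: real_divide_square_eq)
  have "cnj (complex_of_real (1 / sqrt (real d))) * complex_of_real (1 / sqrt (real d)) = complex_of_real (1 / real d)"
    by (simp only: ofr_sq r)
  also have "complex_of_real (1 / real d) = 1 / of_nat d" by simp
  finally show ?thesis .
qed

lemma plus_facts: assumes d: "d \<ge> 2"
  shows "inner_on ({0..<d} \<times> {0::nat}) plus_state plus_state = 1"
    and "inner_on ({0..<d} \<times> {0::nat}) plus_state (\<lambda>(i,a). sg i * plus_state (i,a)) = complex_of_real 0"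
proof -
  define h where "h = complex_of_real (1 / sqrt 2)"
  have hh: "cnj h * h = 1/2" unfolding h_def by (rule half)
  have pv: "\<And>i. plus_state (i, 0) = (if i = 0 \<or> i = 1 then h else 0)" unfolding plus_state_def h_def by simp
  show "inner_on ({0..<d} \<times> {0::nat}) plus_state plus_state = 1"
    unfolding inner_on_def sum_single pv
    by (subst sum01[OF d]) (simp_all add: hh)
  show "inner_on ({0..<d} \<times> {0::nat}) plus_state (\<lambda>(i,a). sg i * plus_state (i,a)) = complex_of_real 0"
    unfolding inner_on_def sum_single
    by (subst sum01[OF d]) (simp_all add: pv sg_def hh)
qed

lemma me_facts: assumes d: "d \<ge> 2"
  shows "inner_on ({0..<d} \<times> {0..<d}) (max_ent d) (max_ent d) = 1"
    and "inner_on ({0..<d} \<times> {0..<d}) (max_ent d) (\<lambda>(i,a). sg i * max_ent d (i,a)) = complex_of_real ((2 - real d) / real d)"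
proof -
  have d0: "d > 0" using d by simp
  define k where "k = complex_of_real (1 / sqrt (real d))"
  have kk: "cnj k * k = 1 / of_nat d" unfolding k_def by (rule invd[OF d0])
  have mv: "\<And>i a. i < d \<Longrightarrow> max_ent d (i, a) = (if i = a then k else 0)" unfolding max_ent_def k_def by simp
  have "inner_on ({0..<d} \<times> {0..<d}) (max_ent d) (max_ent d) = (\<Sum>i\<in>{0..<d}. 1 / of_nat d)"
    unfolding inner_on_def sum_sq
  proof (rule sum.cong[OF refl])
    fix i assume i: "i \<in> {0..<d}"
    show "(\<Sum>a\<in>{0..<d}. cnj (max_ent d (i, a)) * max_ent d (i, a)) = 1 / of_nat d"
      by (subst diag_sum[of i]) (use i in \<open>auto simp: mv kk\<close>)
  qed
  also have "\<dots> = 1" using d0 by simp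
  finally show "inner_on ({0..<d} \<times> {0..<d}) (max_ent d) (max_ent d) = 1" .
  have "inner_on ({0..<d} \<times> {0..<d}) (max_ent d) (\<lambda>(i,a). sg i * max_ent d (i,a)) = (\<Sum>i\<in>{0..<d}. sg i / of_nat d)"
    unfolding inner_on_def sum_sq
  proof (rule sum.cong[OF refl])
    fix i assume i: "i \<in> {0..<d}"
    have "(\<Sum>a\<in>{0..<d}. cnj (max_ent d (i, a)) * (case (i, a) of (i, a) \<Rightarrow> sg i * max_ent d (i, a)))
        = cnj (max_ent d (i, i)) * (case (i, i) of (i, a) \<Rightarrow> sg i * max_ent d (i, a))"
      by (rule diag_sum) (use i in \<open>auto simp: mv\<close>)
    also have "\<dots> = sg i * (cnj k * k)" using i by (simp add: mv)
    also have "\<dots> = sg i / of_nat d" unfolding kk by simp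
    finally show "(\<Sum>a\<in>{0..<d}. cnj (max_ent d (i, a)) * (case (i, a) of (i, a) \<Rightarrow> sg i * max_ent d (i, a))) = sg i / of_nat d" .
  qed
  also have "\<dots> = (\<Sum>i\<in>{0..<d}. sg i) / of_nat d" by (simp add: sum_divide_distrib)
  also have "(\<Sum>i\<in>{0..<d}. sg i) = 1 + (\<Sum>i\<in>{Suc 0..<d}. sg i)" using d by (subst sum.atLeast_Suc_lessThan) (auto simp: sg_def)
  also have "(\<Sum>i\<in>{Suc 0..<d}. sg i) = (\<Sum>i\<in>{Suc 0..<d}. -1)" by (rule sum.cong) (auto simp: sg_def)
  also have "(1 + (\<Sum>i\<in>{Suc 0..<d}. (-1::complex))) / of_nat d = complex_of_real ((2 - real d) / real d)"
    using d by (simp add: of_nat_diff)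
  finally show "inner_on ({0..<d} \<times> {0..<d}) (max_ent d) (\<lambda>(i,a). sg i * max_ent d (i,a)) = complex_of_real ((2 - real d) / real d)" .
qed


lemma max_ent_val: assumes d: "d \<ge> 2"
  shows "channel_opt_success d {0..<d} qI qV (max_ent d) = 1/2 * (1 + sqrt (1 - (1 - 2 / real d)^2))"
proof -
  define c where "c = (2 - real d) / real d"
  have c1: "-1 < c" "c < 1" using d by (auto simp: c_def field_simps)
  have cc: "c^2 = (1 - 2 / real d)^2"
  proof -
    have "c = - (1 - 2 / real d)" using d by (simp add: c_def field_simps)
    thus ?thesis by (simp only: power2_minus)
  qed
  have "channel_opt_success d {0..<d} qI qV (max_ent d) = 1/2 * (1 + sqrt (1 - c^2))"
    unfolding channel_opt_success_def
  proof (rule opt_eq)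
    have me2: "inner_on ({0..<d} \<times> {0..<d}) (max_ent d) (\<lambda>(i,a). sg i * max_ent d (i,a)) = complex_of_real c"
      unfolding c_def by (rule me_facts(2)[OF d])
    show "inner_on ({0..<d} \<times> {0..<d}) (apply_local d qI (max_ent d)) (apply_local d qV (max_ent d)) = complex_of_real c"
      unfolding chan_inner by (rule me2)
  qed (simp_all add: chan_inner me_facts(1)[OF d] c1)
  thus ?thesis unfolding cc .
qed

lemma plus_val: assumes d: "d \<ge> 2"
  shows "channel_opt_success d {0::nat} qI qV plus_state = 1"
proof -
  have "channel_opt_success d {0::nat} qI qV plus_state = 1/2 * (1 + sqrt (1 - 0^2))"
    unfolding channel_opt_success_def
    by (rule opt_eq) (simp_all add: chan_inner plus_facts[OF d])
  thus ?thesis by simp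
qed

theorem mainTheorem12:
  shows "(\<forall>d::nat. d \<ge> 2 \<longrightarrow>
            is_state ({0..<d} \<times> {0::nat}) plus_state
          \<and> channel_opt_success d {0::nat} qI qV plus_state = 1
          \<and> is_state ({0..<d} \<times> {0..<d}) (max_ent d)
          \<and> channel_opt_success d {0..<d} qI qV (max_ent d)
              = 1/2 * (1 + sqrt (1 - (1 - 2 / real d)^2)))
       \<and> (\<lambda>d. channel_opt_success d {0..<d} qI qV (max_ent d)) \<longlonglongrightarrow> 1/2"
proof (intro conjI allI impI)
  fix d :: nat assume d: "d \<ge> 2"
  show "is_state ({0..<d} \<times> {0::nat}) plus_state" unfolding is_state_def by (rule plus_facts(1)[OF d])
  show "channel_opt_success d {0::nat} qI qV plus_state = 1" by (rule plus_val[OF d])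
  show "is_state ({0..<d} \<times> {0..<d}) (max_ent d)" unfolding is_state_def by (rule me_facts(1)[OF d])
  show "channel_opt_success d {0..<d} qI qV (max_ent d) = 1/2 * (1 + sqrt (1 - (1 - 2 / real d)^2))"
    by (rule max_ent_val[OF d])
next
  have "(\<lambda>d::nat. 1/2 * (1 + sqrt (1 - (1 - 2 / real d)^2))) \<longlonglongrightarrow> 1/2 * (1 + sqrt (1 - (1 - 0)^2))"
    by (intro tendsto_intros lim_const_over_n)
  hence lim: "(\<lambda>d::nat. 1/2 * (1 + sqrt (1 - (1 - 2 / real d)^2))) \<longlonglongrightarrow> 1/2" by simp
  show "(\<lambda>d. channel_opt_success d {0..<d} qI qV (max_ent d)) \<longlonglongrightarrow> 1/2"
  proof (rule Lim_transform_eventually[OF lim])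
    show "\<forall>\<^sub>F d in sequentially. 1/2 * (1 + sqrt (1 - (1 - 2 / real d)^2)) = channel_opt_success d {0..<d} qI qV (max_ent d)"
      using eventually_ge_at_top[of "2::nat"] by eventually_elim (simp add: max_ent_val)
  qed
qed

end
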